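(* Let $n\ge2$, $\boldsymbol\sigma\in\{+,-\}^n$, $0\le s<t<1$, and let $\mathcal A:\mathbb Z_L^n\to\mathbb C$. Then $$\|\mathcal U_{s,t,\boldsymbol\sigma}\circ\mathcal A\|_{\max}\prec\|\mathcal A\|_{\max}\cdot(\eta_s/\eta_t)^n.$$
   Context: Fix $|E|<2$; $m=\lim_{\varepsilon\downarrow0}m_{sc}(E+i\varepsilon)$ ($m_{sc}$ the semicircle Stieltjes transform), $m(+)=m$, $m(-)=\bar m$, $\eta_t=(1-t)\operatorname{Im}m$. $S^{(B)}$ is the $L\times L$ matrix $S^{(B)}_{ab}=\frac13\mathbf 1(a-b\in\{-1,0,1\}\bmod L)$. For $m_i=m(\sigma_i)$ with the convention $\sigma_{n+1}=\sigma_1$, $(\mathcal U_{s,t,\boldsymbol\sigma}\circ\mathcal A)_{\mathbf a}=\sum_{\mathbf b\in\mathbb Z_L^n}\prod_{i=1}^n\Big(\frac{1-s\,m_im_{i+1}S^{(B)}}{1-t\,m_im_{i+1}S^{(B)}}\Big)_{a_ib_i}\mathcal A_{\mathbf b}$. $\|\mathcal A\|_{\max}=\max_{\mathbf a}|\mathcal A_{\mathbf a}|$. For deterministic quantities, $\xi\prec\zeta$ means $\xi\le N^\epsilon\zeta$ for all $\epsilon>0$ and large $N$, where $L$, $W$ depend on $N$. *)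

theory Defs
  imports "HOL-Analysis.Analysis" "Jordan_Normal_Form.Gauss_Jordan_Elimination"
begin

definition msc :: "complex \<Rightarrow> complex" where
  "msc z = integral {-2..2::real}
     (\<lambda>x. complex_of_real (sqrt (4 - x\<^sup>2) / (2 * pi)) / (complex_of_real x - z))"

definition mE :: "real \<Rightarrow> complex" where
  "mE E = Lim (at_right (0::real)) (\<lambda>\<epsilon>. msc (complex_of_real E + \<i> * complex_of_real \<epsilon>))"

text \<open>m(+) = m, m(-) = conj m; sign True means +.\<close>
definition msig :: "real \<Rightarrow> bool \<Rightarrow> complex" where
  "msig E sg = (if sg then mE E else cnj (mE E))"

definition eta :: "real \<Rightarrow> real \<Rightarrow> real" where
  "eta E t = (1 - t) * Im (mE E)"

definition SB :: "nat \<Rightarrow> complex mat" where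
  "SB L = mat L L (\<lambda>(a, b). if (a + 1) mod L = b mod L \<or> a mod L = b mod L
                                 \<or> a mod L = (b + 1) mod L then 1/3 else 0)"

definition ratio_mat :: "nat \<Rightarrow> real \<Rightarrow> real \<Rightarrow> complex \<Rightarrow> complex mat" where
  "ratio_mat L s t z = (1\<^sub>m L - (complex_of_real s * z) \<cdot>\<^sub>m SB L) *
       the (mat_inverse (1\<^sub>m L - (complex_of_real t * z) \<cdot>\<^sub>m SB L))"

text \<open>Index tuples a in Z_L^n, represented as extensional functions on {0..<n}.\<close>
definition Idx :: "nat \<Rightarrow> nat \<Rightarrow> (nat \<Rightarrow> nat) set" where
  "Idx L n = PiE {0..<n} (\<lambda>_. {0..<L})"

text \<open>The operator U_{s,t,sigma}; sigma_n = sigma_0 cyclically (0-based indexing).\<close>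
definition Uop :: "real \<Rightarrow> nat \<Rightarrow> nat \<Rightarrow> real \<Rightarrow> real \<Rightarrow> (nat \<Rightarrow> bool)
                    \<Rightarrow> ((nat \<Rightarrow> nat) \<Rightarrow> complex) \<Rightarrow> (nat \<Rightarrow> nat) \<Rightarrow> complex" where
  "Uop E L n s t \<sigma> A a = (\<Sum>b\<in>Idx L n.
      (\<Prod>i<n. ratio_mat L s t (msig E (\<sigma> i) * msig E (\<sigma> ((i + 1) mod n))) $$ (a i, b i)) * A b)"

definition maxnorm :: "nat \<Rightarrow> nat \<Rightarrow> ((nat \<Rightarrow> nat) \<Rightarrow> complex) \<Rightarrow> real" where
  "maxnorm L n A = Max ((\<lambda>a. cmod (A a)) ` Idx L n)"

end

theory Submission
  imports Defs "Jordan_Normal_Form.Determinant"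
begin


definition rs :: "nat \<Rightarrow> complex mat \<Rightarrow> nat \<Rightarrow> real" where
  "rs L M a = (\<Sum>j<L. cmod (M $$ (a, j)))"

lemma SB_carrier: "SB L \<in> carrier_mat L L" by (simp add: SB_def)

lemma SB_entry: "i < L \<Longrightarrow> k < L \<Longrightarrow> SB L $$ (i,k) = (if (i + 1) mod L = k mod L \<or> i mod L = k mod L
                                 \<or> i mod L = (k + 1) mod L then 1/3 else 0)"
  by (simp add: SB_def)

lemma SB_cmod: "i < L \<Longrightarrow> k < L \<Longrightarrow> cmod (SB L $$ (i,k)) = Re (SB L $$ (i,k))"
  by (simp add: SB_entry)

lemma SB_rs: assumes "i < L" shows "rs L (SB L) i \<le> 1"
proof -
  let ?P = "\<lambda>k. (i + 1) mod L = k mod L \<or> i mod L = k mod L \<or> i mod L = (k + 1) mod L"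
  have "rs L (SB L) i = (\<Sum>k<L. if ?P k then 1/3 else 0)"
    unfolding rs_def using assms by (intro sum.cong) (simp_all add: SB_entry)
  also have "\<dots> = real (card ({..<L} \<inter> {k. ?P k})) * (1/3)"
    by (simp add: sum.If_cases, intro arg_cong[where f=card]) auto
  also have "{..<L} \<inter> {k. ?P k} = {k. k<L \<and> ?P k}" by auto
  also have "real (card {k. k<L \<and> ?P k}) * (1/3) = card {k. k<L \<and> ?P k} / 3" by simp
  also have "card {k. k<L \<and> ?P k} \<le> 3"
  proof -
    have "{k. k<L \<and> ?P k} \<subseteq> {(i+1) mod L, i, (i + L - 1) mod L}"
    proof
      fix k assume k: "k \<in> {k. k<L \<and> ?P k}"
      hence kL: "k < L" and P: "?P k" by auto
      show "k \<in> {(i+1) mod L, i, (i + L - 1) mod L}"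
      proof (cases "(i + 1) mod L = k mod L")
        case True thus ?thesis using kL by simp
      next
        case F1: False
        show ?thesis
        proof (cases "i mod L = k mod L")
          case True thus ?thesis using kL assms by simp
        next
          case False
          with P F1 have "i mod L = (k + 1) mod L" by auto
          hence ik: "i = (k + 1) mod L" using assms by simp
          have "(i + L - 1) mod L = k"
          proof (cases "k + 1 < L")
            case True
            hence "i = k + 1" using ik by simp
            hence "i + L - 1 = k + L" by simp
            thus ?thesis using kL by simp
          next
            case False
            hence "k + 1 = L" using kL by simp
            hence "i = 0" using ik by simp
            thus ?thesis using \<open>k + 1 = L\<close> by simp
          qed
          thus ?thesis by simp
        qed
      qed
    qed
    hence "card {k. k<L \<and> ?P k} \<le> card {(i+1) mod L, i, (i + L - 1) mod L}"
      by (rule card_mono[rotated]) simp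
    also have "\<dots> \<le> 3" by (simp add: card_insert_if)
    finally show ?thesis .
  qed
  hence "card {k. k<L \<and> ?P k} / 3 \<le> (1::real)" by simp
  finally show ?thesis .
qed


lemma mult_entry: "P \<in> carrier_mat L L \<Longrightarrow> Q \<in> carrier_mat L L \<Longrightarrow> i < L \<Longrightarrow> j < L \<Longrightarrow>
   (P * Q) $$ (i,j) = (\<Sum>k<L. P $$ (i,k) * Q $$ (k,j))"
  by (simp add: scalar_prod_def lessThan_atLeast0 carrier_matD)

lemma rs_mult: assumes P: "P \<in> carrier_mat L L" and Q: "Q \<in> carrier_mat L L" and a: "a < L"
  and c: "\<And>k. k < L \<Longrightarrow> rs L Q k \<le> c"
  shows "rs L (P * Q) a \<le> rs L P a * c"
proof -
  have "rs L (P * Q) a = (\<Sum>j<L. cmod (\<Sum>k<L. P $$ (a,k) * Q $$ (k,j)))"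
    unfolding rs_def using P Q a by (intro sum.cong refl arg_cong[where f=cmod] mult_entry) auto
  also have "\<dots> \<le> (\<Sum>j<L. \<Sum>k<L. cmod (P $$ (a,k)) * cmod (Q $$ (k,j)))"
    by (intro sum_mono order.trans[OF norm_sum]) (simp add: norm_mult)
  also have "\<dots> = (\<Sum>k<L. cmod (P $$ (a,k)) * rs L Q k)"
    unfolding rs_def by (subst sum.swap) (simp add: sum_distrib_left)
  also have "\<dots> \<le> (\<Sum>k<L. cmod (P $$ (a,k)) * c)"
    by (intro sum_mono mult_left_mono c) auto
  also have "\<dots> = rs L P a * c" unfolding rs_def by (simp add: sum_distrib_right)
  finally show ?thesis .
qed

lemma M_apply: "w \<in> carrier_vec L \<Longrightarrow> i < L \<Longrightarrow>
  ((1\<^sub>m L - c \<cdot>\<^sub>m SB L) *\<^sub>v w) $ i = w $ i - c * (\<Sum>k<L. SB L $$ (i,k) * w $ k)"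
  by (simp add: scalar_prod_def lessThan_atLeast0 SB_carrier algebra_simps carrier_matD carrier_vecD SB_def sum_subtractf sum_distrib_left
       if_distrib[of "\<lambda>x. x * _"] if_distrib[of "\<lambda>x. _ * x"] cong: if_cong)

lemma M_mult: "B \<in> carrier_mat L L \<Longrightarrow> i < L \<Longrightarrow> j < L \<Longrightarrow>
  ((1\<^sub>m L - c \<cdot>\<^sub>m SB L) * B) $$ (i,j) = B $$ (i,j) - c * (\<Sum>k<L. SB L $$ (i,k) * B $$ (k,j))"
  by (simp add: scalar_prod_def lessThan_atLeast0 SB_carrier algebra_simps carrier_matD carrier_vecD SB_def sum_subtractf sum_distrib_left
       if_distrib[of "\<lambda>x. x * _"] if_distrib[of "\<lambda>x. _ * x"] cong: if_cong)


lemma rs_nonneg: "0 \<le> rs L M a" unfolding rs_def by (simp add: sum_nonneg)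

lemma rs_delta: assumes a: "a < L" and h: "\<And>j. j < L \<Longrightarrow> M $$ (a,j) = (if a = j then 1 else 0) + d * X $$ (a,j)"
  shows "rs L M a \<le> 1 + cmod d * rs L X a"
proof -
  have "rs L M a \<le> (\<Sum>j<L. (if a = j then 1 else 0) + cmod d * cmod (X $$ (a,j)))"
    unfolding rs_def
  proof (intro sum_mono)
    fix j assume "j \<in> {..<L}"
    hence "M $$ (a,j) = (if a = j then 1 else 0) + d * X $$ (a,j)" using h by simp
    also have "cmod \<dots> \<le> cmod (if a = j then 1 else 0 :: complex) + cmod (d * X $$ (a,j))" by (rule norm_triangle_ineq)
    also have "cmod (if a = j then 1 else 0 :: complex) = (if a = j then 1 else 0)" by simp
    finally show "cmod (M $$ (a,j)) \<le> (if a = j then 1 else 0) + cmod d * cmod (X $$ (a,j))"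
      by (simp only: norm_mult)
  qed
  also have "\<dots> = (\<Sum>j<L. (if a = j then 1 else 0)) + cmod d * rs L X a"
    by (simp only: sum.distrib rs_def sum_distrib_left)
  also have "(\<Sum>j<L. (if a = j then 1 else 0 :: real)) = 1" using a by simp
  finally show ?thesis .
qed

lemma M_det: assumes c: "cmod c < 1" shows "det (1\<^sub>m L - c \<cdot>\<^sub>m SB L) \<noteq> 0"
proof (rule notI)
  let ?M = "1\<^sub>m L - c \<cdot>\<^sub>m SB L"
  have MC: "?M \<in> carrier_mat L L" by (rule minus_carrier_mat[OF smult_carrier_mat[OF SB_carrier]])
  assume "det ?M = 0"
  then obtain v where v: "v \<in> carrier_vec L" "v \<noteq> 0\<^sub>v L" "?M *\<^sub>v v = 0\<^sub>v L"
    using det_0_iff_vec_prod_zero_field[OF MC] by blast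
  have L: "L > 0"
  proof (rule ccontr)
    assume "\<not> L > 0" hence L0: "L = 0" by simp
    have "v = 0\<^sub>v L" using v(1) L0 by (intro eq_vecI) auto
    with v(2) show False by simp
  qed
  define \<mu> where "\<mu> = Max ((\<lambda>k. cmod (v $ k)) ` {..<L})"
  have mu: "cmod (v $ k) \<le> \<mu>" if "k < L" for k unfolding \<mu>_def using that by (intro Max_ge) auto
  obtain i where i: "i < L" "cmod (v $ i) = \<mu>"
  proof -
    have "\<mu> \<in> (\<lambda>k. cmod (v $ k)) ` {..<L}" unfolding \<mu>_def using L by (intro Max_in) auto
    thus ?thesis using that by auto
  qed
  have mu0: "0 \<le> \<mu>" using mu[OF i(1)] norm_ge_zero order_trans by blast
  have "v $ i = c * (\<Sum>k<L. SB L $$ (i,k) * v $ k)"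
    using M_apply[OF v(1) i(1), of c] v(3) i(1) by simp
  hence "\<mu> = cmod c * cmod (\<Sum>k<L. SB L $$ (i,k) * v $ k)" using i by (simp add: norm_mult)
  also have "cmod (\<Sum>k<L. SB L $$ (i,k) * v $ k) \<le> (\<Sum>k<L. cmod (SB L $$ (i,k)) * \<mu>)"
  proof (rule order.trans[OF norm_sum sum_mono])
    fix k assume "k \<in> {..<L}"
    hence "cmod (v $ k) \<le> \<mu>" using mu by simp
    thus "cmod (SB L $$ (i,k) * v $ k) \<le> cmod (SB L $$ (i,k)) * \<mu>"
      unfolding norm_mult by (rule mult_left_mono) simp
  qed
  hence "cmod c * cmod (\<Sum>k<L. SB L $$ (i,k) * v $ k) \<le> cmod c * (\<Sum>k<L. cmod (SB L $$ (i,k)) * \<mu>)"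
    by (rule mult_left_mono) simp
  also have "(\<Sum>k<L. cmod (SB L $$ (i,k)) * \<mu>) = rs L (SB L) i * \<mu>" by (simp add: rs_def sum_distrib_right)
  also have "rs L (SB L) i * \<mu> \<le> 1 * \<mu>" using SB_rs[OF i(1)] mu0 by (rule mult_right_mono)
  hence "cmod c * (rs L (SB L) i * \<mu>) \<le> cmod c * (1 * \<mu>)" by (rule mult_left_mono) simp
  finally have le: "\<mu> \<le> cmod c * \<mu>" by simp
  have "\<mu> \<le> 0"
  proof (rule ccontr)
    assume "\<not> \<mu> \<le> 0" hence "\<mu> > 0" by simp
    hence "cmod c * \<mu> < 1 * \<mu>" using c by (intro mult_strict_right_mono) auto
    thus False using le by simp
  qed
  have "v = 0\<^sub>v L"
  proof (rule eq_vecI)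
    show "dim_vec v = dim_vec (0\<^sub>v L)" using v(1) by simp
    fix k assume "k < dim_vec (0\<^sub>v L)"
    hence k: "k < L" by simp
    have "cmod (v $ k) \<le> 0" using mu[OF k] \<open>\<mu> \<le> 0\<close> by linarith
    hence "v $ k = 0" by simp
    thus "v $ k = 0\<^sub>v L $ k" using k by simp
  qed
  with v(2) show False by simp
qed


lemma ratio_rs: assumes x: "cmod x \<le> 1" and st: "s < t" "t < 1" "0 \<le> s" and a: "a < L"
  shows "rs L (ratio_mat L s t x) a \<le> (1 - s) / (1 - t)"
proof -
  define c where "c = complex_of_real t * x"
  define c' where "c' = complex_of_real s * x"
  let ?M = "1\<^sub>m L - c \<cdot>\<^sub>m SB L"
  have MC: "?M \<in> carrier_mat L L" by (rule minus_carrier_mat[OF smult_carrier_mat[OF SB_carrier]])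
  have t0: "0 \<le> t" using st by simp
  have cc: "cmod c \<le> t" unfolding c_def using x t0 by (simp add: norm_mult mult_left_le)
  hence c1: "cmod c < 1" using st by simp
  obtain B where B: "mat_inverse ?M = Some B"
  proof (cases "mat_inverse ?M")
    case None
    from mat_inverse(1)[OF MC None, of "()"] det_non_zero_imp_unit[OF MC M_det[OF c1], of "()"]
    show ?thesis by simp
  qed
  have MB: "?M * B = 1\<^sub>m L" using mat_inverse(2)[OF MC B] by blast
  have BC: "B \<in> carrier_mat L L" using mat_inverse(2)[OF MC B] by blast
  have Bent: "B $$ (i,j) = (if i = j then 1 else 0) + c * (SB L * B) $$ (i,j)" if "i < L" "j < L" for i j
  proof -
    have "(?M * B) $$ (i,j) = (if i = j then 1 else 0)" using MB that by simp
    thus ?thesis using M_mult[OF BC that, of c] mult_entry[OF SB_carrier BC that] by (simp add: algebra_simps)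
  qed
  define \<beta> where "\<beta> = Max (rs L B ` {..<L})"
  have beta: "rs L B k \<le> \<beta>" if "k < L" for k unfolding \<beta>_def using that by (intro Max_ge) auto
  have b0: "0 \<le> \<beta>" using beta[OF order.strict_trans1[OF le0 a]] rs_nonneg order_trans by blast
  have SBrs: "rs L (SB L * B) k \<le> \<beta>" if "k < L" for k
  proof -
    have "rs L (SB L * B) k \<le> rs L (SB L) k * \<beta>" by (rule rs_mult[OF SB_carrier BC that beta])
    also have "\<dots> \<le> 1 * \<beta>" by (intro mult_right_mono SB_rs that b0)
    finally show ?thesis by simp
  qed
  have "rs L B k \<le> 1 + t * \<beta>" if k: "k < L" for k
  proof -
    have "rs L B k \<le> 1 + cmod c * rs L (SB L * B) k" by (rule rs_delta[OF k Bent[OF k]])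
    also have "\<dots> \<le> 1 + t * \<beta>" using cc SBrs[OF k] t0 by (intro add_left_mono mult_mono) (auto simp: rs_nonneg)
    finally show ?thesis .
  qed
  hence "\<beta> \<le> 1 + t * \<beta>" unfolding \<beta>_def using a by (subst Max_le_iff) auto
  hence bb: "\<beta> \<le> 1 / (1 - t)" using st by (simp add: field_simps)
  have Rent: "ratio_mat L s t x $$ (a,j) = (if a = j then 1 else 0) + (c - c') * (SB L * B) $$ (a,j)" if j: "j < L" for j
  proof -
    have "ratio_mat L s t x = (1\<^sub>m L - c' \<cdot>\<^sub>m SB L) * B" unfolding ratio_mat_def c_def c'_def using B c_def by simp
    hence "ratio_mat L s t x $$ (a,j) = B $$ (a,j) - c' * (SB L * B) $$ (a,j)"
      using M_mult[OF BC a j, of c'] mult_entry[OF SB_carrier BC a j] by simp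
    thus ?thesis using Bent[OF a j] by (simp add: algebra_simps)
  qed
  have "rs L (ratio_mat L s t x) a \<le> 1 + cmod (c - c') * rs L (SB L * B) a" by (rule rs_delta[OF a Rent])
  also have "cmod (c - c') \<le> t - s"
  proof -
    have "c - c' = complex_of_real (t - s) * x" unfolding c_def c'_def by (simp add: algebra_simps)
    hence "cmod (c - c') = \<bar>t - s\<bar> * cmod x" by (simp only: norm_mult norm_of_real)
    also have "\<dots> = (t - s) * cmod x" using st by simp
    also have "\<dots> \<le> (t - s) * 1" using x st by (intro mult_left_mono) auto
    finally show ?thesis by simp
  qed
  hence "1 + cmod (c - c') * rs L (SB L * B) a \<le> 1 + (t - s) * (1 / (1 - t))"
    using SBrs[OF a] bb st by (intro add_left_mono mult_mono) (auto simp: rs_nonneg)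
  also have "1 + (t - s) * (1 / (1 - t)) = (1 - s) / (1 - t)" using st by (simp add: field_simps)
  finally show ?thesis .
qed


lemma Idx_finite: "finite (Idx L n)" unfolding Idx_def by (intro finite_PiE) auto

lemma Idx_ne: "L \<ge> 1 \<Longrightarrow> Idx L n \<noteq> {}" unfolding Idx_def by (simp add: PiE_eq_empty_iff)

lemma maxnorm_ge: "a \<in> Idx L n \<Longrightarrow> cmod (A a) \<le> maxnorm L n A"
  unfolding maxnorm_def by (intro Max_ge finite_imageI Idx_finite) auto

lemma maxnorm_nonneg: "L \<ge> 1 \<Longrightarrow> 0 \<le> maxnorm L n A"
  using Idx_ne[of L n] maxnorm_ge[of _ L n A] by (meson all_not_in_conv norm_ge_zero order_trans)

lemma Uop_bound:
  assumes L: "L \<ge> 1" and x: "\<And>i. i < n \<Longrightarrow> cmod (msig E (\<sigma> i) * msig E (\<sigma> ((i + 1) mod n))) \<le> 1"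
    and st: "s < t" "t < 1" "0 \<le> s"
  shows "maxnorm L n (Uop E L n s t \<sigma> A) \<le> maxnorm L n A * ((1 - s) / (1 - t)) ^ n"
proof -
  let ?R = "\<lambda>i. ratio_mat L s t (msig E (\<sigma> i) * msig E (\<sigma> ((i + 1) mod n)))"
  let ?\<mu> = "maxnorm L n A"
  have "cmod (Uop E L n s t \<sigma> A a) \<le> ?\<mu> * ((1 - s) / (1 - t)) ^ n" if a: "a \<in> Idx L n" for a
  proof -
    have "cmod (Uop E L n s t \<sigma> A a) \<le> (\<Sum>b\<in>Idx L n. (\<Prod>i<n. cmod (?R i $$ (a i, b i))) * ?\<mu>)"
      unfolding Uop_def
      by (intro order.trans[OF norm_sum] sum_mono)
         (auto simp: norm_mult prod_norm intro!: mult_left_mono maxnorm_ge prod_nonneg)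
    also have "\<dots> = ?\<mu> * (\<Sum>b\<in>Idx L n. \<Prod>i\<in>{0..<n}. cmod (?R i $$ (a i, b i)))"
      by (simp add: sum_distrib_left mult.commute atLeast0LessThan)
    also have "(\<Sum>b\<in>Idx L n. \<Prod>i\<in>{0..<n}. cmod (?R i $$ (a i, b i))) = (\<Prod>i\<in>{0..<n}. \<Sum>j\<in>{0..<L}. cmod (?R i $$ (a i, j)))"
      unfolding Idx_def by (rule prod_sum_PiE[symmetric]) auto
    also have "\<dots> = (\<Prod>i\<in>{0..<n}. rs L (?R i) (a i))" unfolding rs_def by (simp add: atLeast0LessThan)
    also have "\<dots> \<le> (\<Prod>i\<in>{0..<n}. (1 - s) / (1 - t))"
    proof (intro prod_mono conjI rs_nonneg ratio_rs x st)
      fix i assume i: "i \<in> {0..<n}"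
      thus "i < n" by simp
      show "a i < L" using a i unfolding Idx_def by auto
    qed
    also have "\<dots> = ((1 - s) / (1 - t)) ^ n" by simp
    finally show ?thesis using maxnorm_nonneg[OF L] by (simp add: mult_left_mono)
  qed
  thus ?thesis unfolding maxnorm_def[of L n "Uop E L n s t \<sigma> A"]
    using Idx_ne[OF L] Idx_finite by (subst Max_le_iff) auto
qed



lemma alg_id:
  fixes a q :: complex
  assumes a: "a \<noteq> 0" and q: "q \<noteq> 0" and h1: "1 - q * a \<noteq> 0" and h2: "1 - q / a \<noteq> 0"
  shows "-(1/4) * ((a + 1/a) + 2*q + (q - 1/q) * (q * (1/a) / (1 - q * (1/a)) + q * a / (1 - q * a)))
       = ((a - 1/a) / (2 * \<i>))^2 / ((a + 1/a) - (q + 1/q))"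
proof -
  define d1 where "d1 = a - q"
  define d2 where "d2 = a * q - 1"
  have d1: "d1 \<noteq> 0" using h2 a by (auto simp: field_simps d1_def)
  have d2: "d2 \<noteq> 0" using h1 by (auto simp: algebra_simps d2_def)
  have e1: "q * (1/a) / (1 - q * (1/a)) = q / d1" using a d1 by (simp add: field_simps d1_def)
  have e2: "q * a / (1 - q * a) = - (q * a) / d2" using d2 by (simp add: field_simps d2_def)
  have e3: "(a + 1/a) - (q + 1/q) = d1 * d2 / (a * q)" using a q by (simp add: field_simps d1_def d2_def) algebra
  have e4: "((a - 1/a) / (2 * \<i>))^2 = - ((a*a - 1)^2) / (4 * a * a)" using a by (simp add: field_simps power2_eq_square) algebra
  show ?thesis unfolding e1 e2 e3 e4 using a q d1 d2
    apply (simp add: field_simps)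
    by (simp add: d1_def d2_def algebra_simps power2_eq_square)
qed


lemma aux_id:
  fixes a q P Q :: complex
  shows "(8*a + 8/a)/2 - (P*(\<i>*q)/a + Q*(a*\<i>*q))*(\<i>*(q-1/q))*4 = a*4 + (4/a + (q-1/q)*(q*P/a + q*a*Q)*4)"
proof -
  have "\<i> * \<i> = (-1::complex)" by simp
  show ?thesis by (simp add: algebra_simps add_divide_distrib diff_divide_distrib)
qed

definition Gc :: "complex \<Rightarrow> complex \<Rightarrow> complex" where
  "Gc q u = -(1/4) * (2 * sin u + 2 * q * u - \<i> * (q - 1/q) * (Ln (1 - q * exp (-(\<i> * u))) - Ln (1 - q * exp (\<i> * u))))"

lemma Re_pos_not_nonpos: "0 < Re w \<Longrightarrow> w \<notin> \<real>\<^sub>\<le>\<^sub>0"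
  by (auto simp: complex_nonpos_Reals_iff)

lemma one_minus_Re: assumes "cmod q < 1" "cmod w = 1" shows "0 < Re (1 - q * w)"
proof -
  have "Re (q * w) \<le> cmod (q * w)" by (rule complex_Re_le_cmod)
  also have "\<dots> < 1" using assms by (simp add: norm_mult)
  finally show ?thesis by simp
qed

lemma Gc_deriv:
  fixes \<theta> :: real
  assumes q0: "q \<noteq> 0" and q1: "cmod q < 1"
  shows "(Gc q has_field_derivative (complex_of_real (sin \<theta>))^2 / (2 * complex_of_real (cos \<theta>) - (q + 1/q))) (at (complex_of_real \<theta>))"
proof -
  define a where "a = exp (\<i> * complex_of_real \<theta>)"
  have a1: "cmod a = 1" unfolding a_def by simp
  have am: "exp (-(\<i> * complex_of_real \<theta>)) = 1 / a" unfolding a_def by (simp add: exp_minus divide_inverse)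
  have a0: "a \<noteq> 0" unfolding a_def by simp
  have ia1: "cmod (1/a) = 1" using a1 by (simp add: norm_divide)
  have r1: "0 < Re (1 - q * a)" by (rule one_minus_Re[OF q1 a1])
  have r2: "0 < Re (1 - q * (1/a))" by (rule one_minus_Re[OF q1 ia1])
  have c: "complex_of_real (cos \<theta>) = (a + 1/a) / 2" unfolding cos_of_real[symmetric] cos_exp_eq am a_def by simp
  have s: "complex_of_real (sin \<theta>) = (a - 1/a) / (2 * \<i>)" unfolding sin_of_real[symmetric] sin_exp_eq am a_def by simp
  have n1: "1 - q * exp (\<i> * complex_of_real \<theta>) \<notin> \<real>\<^sub>\<le>\<^sub>0"
    using Re_pos_not_nonpos[OF r1] unfolding a_def .
  have n2: "1 - q * exp (-(\<i> * complex_of_real \<theta>)) \<notin> \<real>\<^sub>\<le>\<^sub>0"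
    using Re_pos_not_nonpos[OF r2] unfolding am .
  have two_half: "2 * ((a + 1/a) / 2) = a + 1/a" by simp
  have h1: "1 - q * a \<noteq> 0"
  proof
    assume "1 - q * a = 0" hence "Re (1 - q * a) = 0" by simp
    with r1 show False by simp
  qed
  have h2: "1 - q / a \<noteq> 0" using r2 by auto
  have k1: "q / (a * (1 - q / a)) = q * inverse (1 - q/a) / a" by (simp add: divide_inverse inverse_mult_distrib mult_ac)
  have k2: "q * a / (1 - q * a) = q * a * inverse (1 - q*a)" by (simp add: divide_inverse)
  have ea: "exp (\<i> * complex_of_real \<theta>) = a" unfolding a_def ..
  show ?thesis unfolding Gc_def
    apply (rule derivative_eq_intros refl n1 n2)+
    unfolding am ea cos_of_real c s two_half
    apply (subst alg_id[OF a0 q0 h1 h2, symmetric])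
    apply simp
    apply (subst k1, subst k2)
    apply (rule aux_id)
    done
qed


lemma not_real_sum:
  fixes x :: real
  assumes q0: "q \<noteq> 0" and q1: "cmod q < 1" and x: "\<bar>x\<bar> \<le> 2"
  shows "complex_of_real x \<noteq> q + 1/q"
proof
  assume eq: "complex_of_real x = q + 1/q"
  define \<theta> where "\<theta> = arccos (x/2)"
  have cx: "cos \<theta> = x/2" unfolding \<theta>_def using x by simp
  define a where "a = exp (\<i> * complex_of_real \<theta>)"
  have a1: "cmod a = 1" unfolding a_def by simp
  have a0: "a \<noteq> 0" unfolding a_def by simp
  have x2: "x = 2 * cos \<theta>" using cx by simp
  have "complex_of_real x = 2 * complex_of_real (cos \<theta>)" unfolding x2 by simp
  also have "complex_of_real (cos \<theta>) = (a + 1/a)/2"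
  proof -
    have am: "exp (-(\<i> * complex_of_real \<theta>)) = 1 / a" unfolding a_def by (simp add: exp_minus divide_inverse)
    show ?thesis unfolding cos_of_real[symmetric] cos_exp_eq am a_def by simp
  qed
  also have "2 * ((a + 1/a)/2) = a + 1/a" by simp
  finally have "a + 1/a = q + 1/q" using eq by simp
  hence "(a + 1/a) * (a * q) = (q + 1/q) * (a * q)" by (rule arg_cong)
  moreover have "(a + 1/a) * (a * q) = a * a * q + q" using a0 by (simp add: distrib_right power2_eq_square)
  moreover have "(q + 1/q) * (a * q) = a * q * q + a" using q0 by (simp add: distrib_right power2_eq_square)
  ultimately have "a * a * q + q = a * q * q + a" by metis
  hence "(a - q) * (a * q - 1) = 0" by (simp add: algebra_simps)
  hence "a = q \<or> a * q = 1" by auto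
  moreover have "cmod (a * q) < 1" using a1 q1 by (simp add: norm_mult)
  ultimately show False using a1 q1 by auto
qed

lemma l1:
  fixes w d :: complex assumes w: "w \<noteq> 0"
  shows "(-1/(2*w)) * (w^2/d) = -(w/2)/d"
proof -
  have e: "(-1/(2*w)) * w^2 = -(w/2)" using w by (simp add: power2_eq_square)
  show ?thesis by (simp only: times_divide_eq_right e)
qed
lemma l2:
  fixes w d p :: complex assumes p: "p \<noteq> 0"
  shows "-(p/2) * ((w/p)/d) = -(w/2)/d"
proof -
  have e: "-(p/2) * (w/p) = -(w/2)" using p by simp
  have "-(p/2) * ((w/p)/d) = (-(p/2) * (w/p))/d" by (rule times_divide_eq_right)
  thus ?thesis unfolding e .
qed
lemma eqL:
  fixes r :: real and x :: real and z :: complex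
  assumes r0: "r > 0"
  shows "(inverse (- r) * (1/2)) *\<^sub>R ((complex_of_real r)^2 / (2 * complex_of_real (x/2) - z))
           = - (complex_of_real r / 2) / (complex_of_real x - z)"
proof -
  have t: "2 * complex_of_real (x/2) = complex_of_real x" by simp
  have o: "complex_of_real (inverse (- r) * (1/2)) = - 1 / (2 * complex_of_real r)"
    unfolding of_real_mult of_real_inverse of_real_minus of_real_divide of_real_1 of_real_numeral
    using r0 by (simp add: inverse_eq_divide)
  have w: "complex_of_real r \<noteq> 0" using r0 by simp
  show ?thesis unfolding t scaleR_conv_of_real o by (rule l1[OF w])
qed
lemma eqR:
  fixes r :: real and x :: real and z :: complex
  shows "- (complex_of_real pi / 2) * (complex_of_real (2 * r / (2 * pi)) / (complex_of_real x - z))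
       = - (complex_of_real r / 2) / (complex_of_real x - z)"
proof -
  have o: "complex_of_real (2 * r / (2 * pi)) = complex_of_real r / complex_of_real pi" by simp
  have p: "complex_of_real pi \<noteq> 0" by simp
  show ?thesis unfolding o by (rule l2[OF p])
qed
lemma msc_closed:
  assumes q0: "q \<noteq> 0" and q1: "cmod q < 1"
  shows "msc (q + 1/q) = - q"
proof -
  define z where "z = q + 1/q"
  define h where "h = (\<lambda>x::real. complex_of_real (sqrt (4 - x\<^sup>2) / (2 * pi)) / (complex_of_real x - z))"
  define F where "F = (\<lambda>x::real. Gc q (complex_of_real (arccos (x/2))))"
  define F' where "F' = (\<lambda>x. - (complex_of_real pi / 2) * h x)"
  have gd: "((\<lambda>\<theta>. Gc q (complex_of_real \<theta>)) has_vector_derivative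
        (complex_of_real (sin \<theta>))^2 / (2 * complex_of_real (cos \<theta>) - z)) (at \<theta>)" for \<theta>
    unfolding z_def by (rule has_vector_derivative_real_field[OF Gc_deriv[OF q0 q1]])
  have gc: "continuous_on UNIV (\<lambda>\<theta>. Gc q (complex_of_real \<theta>))"
    using gd by (intro continuous_at_imp_continuous_on ballI has_vector_derivative_continuous) blast
  have Fc: "continuous_on {-2..2} F" unfolding F_def
    by (rule continuous_on_compose2[OF gc, of _ "\<lambda>x. arccos (x/2)", simplified])
       (intro continuous_intros, auto)
  have Fd: "(F has_vector_derivative F' x) (at x)" if x: "x \<in> {-2<..<2}" for x
  proof -
    have x1: "-1 < x/2" "x/2 < 1" using x by auto
    have ad: "((\<lambda>x. arccos (x/2)) has_vector_derivative (inverse (- sqrt (1 - (x/2)\<^sup>2)) * (1/2))) (at x)"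
      unfolding has_real_derivative_iff_has_vector_derivative[symmetric]
      by (rule DERIV_chain2[where g="\<lambda>x. x/2" and x=x, OF DERIV_arccos[OF x1]]) (rule derivative_eq_intros refl | simp)+
    from vector_diff_chain_at[OF ad gd]
    have D: "(F has_vector_derivative (inverse (- sqrt (1 - (x/2)\<^sup>2)) * (1/2)) *\<^sub>R
       ((complex_of_real (sin (arccos (x/2))))^2 / (2 * complex_of_real (cos (arccos (x/2))) - z))) (at x)"
      unfolding F_def o_def .
    define r where "r = sqrt (1 - (x/2)\<^sup>2)"
    have r0: "r > 0" unfolding r_def using x1 by (simp add: abs_square_less_1 abs_less_iff)
    have sr: "sin (arccos (x/2)) = r" unfolding r_def using x1 by (simp add: sin_arccos)
    have cr: "cos (arccos (x/2)) = x/2" using x1 by simp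
    have s4: "sqrt (4 - x\<^sup>2) = 2 * r"
    proof -
      have "4 - x\<^sup>2 = 2\<^sup>2 * (1 - (x/2)\<^sup>2)" by (simp add: power2_eq_square field_simps)
      hence "sqrt (4 - x\<^sup>2) = sqrt (2\<^sup>2) * sqrt (1 - (x/2)\<^sup>2)" by (simp only: real_sqrt_mult)
      thus ?thesis unfolding r_def by simp
    qed
    have xz: "complex_of_real x - z \<noteq> 0" using not_real_sum[OF q0 q1, of x] x unfolding z_def by (auto simp: abs_le_iff)
    have "(inverse (- sqrt (1 - (x/2)\<^sup>2)) * (1/2)) *\<^sub>R
       ((complex_of_real (sin (arccos (x/2))))^2 / (2 * complex_of_real (cos (arccos (x/2))) - z)) = F' x"
      unfolding sr cr r_def[symmetric] eqL[OF r0] F'_def h_def s4 eqR ..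
    with D show ?thesis by simp
  qed
  have I: "(F' has_integral (F 2 - F (-2))) {-2..2}"
    by (rule fundamental_theorem_of_calculus_interior[OF _ Fc Fd]) auto
  have "F 2 = 0" unfolding F_def Gc_def by simp
  moreover have "F (-2) = - (q * complex_of_real pi) / 2"
  proof -
    have e1: "exp (\<i> * complex_of_real pi) = -1" by simp
    have e2: "exp (-(\<i> * complex_of_real pi)) = -1" by (simp add: exp_minus)
    have s0: "sin (complex_of_real pi) = 0" by (simp flip: sin_of_real)
    have ar: "arccos (- 2 / 2) = pi" by simp
    show ?thesis unfolding F_def Gc_def ar e1 e2 s0 by simp
  qed
  ultimately have I2: "(F' has_integral (q * complex_of_real pi / 2)) {-2..2}" using I by simp
  have "((\<lambda>x. (- 2 / complex_of_real pi) * F' x) has_integral ((- 2 / complex_of_real pi) * (q * complex_of_real pi / 2))) {-2..2}"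
    by (rule has_integral_mult_right[OF I2])
  moreover have "(\<lambda>x. (- 2 / complex_of_real pi) * F' x) = h" unfolding F'_def by (auto simp: field_simps)
  moreover have "(- 2 / complex_of_real pi) * (q * complex_of_real pi / 2) = - q" by (simp add: field_simps)
  ultimately have "(h has_integral (- q)) {-2..2}" by simp
  thus ?thesis unfolding msc_def z_def[symmetric] h_def[symmetric] by (rule integral_unique)
qed

lemma q_inside:
  fixes w :: complex
  assumes w0: "w \<noteq> 0" and pos: "0 < Im (w + 1/w)" and neg: "Im w < 0"
  shows "cmod w < 1"
proof (rule ccontr)
  assume "\<not> cmod w < 1"
  hence n1: "1 \<le> (cmod w)^2" by (simp add: one_le_power)
  have n0: "(cmod w)^2 > 0" using w0 by simp
  have "Im (w + 1/w) = Im w - Im w / (cmod w)^2" by (simp add: Im_divide')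
  also have "\<dots> = Im w * (1 - 1 / (cmod w)^2)" by (simp add: algebra_simps)
  also have "\<dots> \<le> 0"
  proof -
    have "1 / (cmod w)^2 \<le> 1" using n1 n0 by (simp add: divide_le_eq)
    thus ?thesis using neg by (intro mult_nonpos_nonneg) auto
  qed
  finally show False using pos by simp
qed

lemma mE_val:
  assumes E: "\<bar>E\<bar> < 2"
  shows "mE E = Complex (- E / 2) (sqrt (4 - E\<^sup>2) / 2)"
proof -
  define z where "z = (\<lambda>\<epsilon>::real. complex_of_real E + \<i> * complex_of_real \<epsilon>)"
  define qf where "qf = (\<lambda>\<epsilon>. (z \<epsilon> - \<i> * csqrt (4 - (z \<epsilon>)\<^sup>2)) / 2)"
  define q0 where "q0 = Complex (E / 2) (- sqrt (4 - E\<^sup>2) / 2)"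
  have E4: "0 < 4 - E\<^sup>2"
  proof -
    have "\<bar>E\<bar> * \<bar>E\<bar> < 2 * 2" using E by (intro mult_strict_mono) auto
    hence "E * E < 4" by (simp add: abs_mult_self_eq)
    thus ?thesis by (simp add: power2_eq_square)
  qed
  have z0: "z 0 = complex_of_real E" unfolding z_def by simp
  have nn: "4 - (z 0)\<^sup>2 \<notin> \<real>\<^sub>\<le>\<^sub>0" unfolding z0 using E4
    by (auto simp: complex_nonpos_Reals_iff)
  have cs0: "csqrt (4 - (z 0)\<^sup>2) = complex_of_real (sqrt (4 - E\<^sup>2))"
  proof -
    have "4 - (z 0)\<^sup>2 = complex_of_real (4 - E\<^sup>2)" unfolding z0 by simp
    thus ?thesis using E4 by (simp only: csqrt_of_real less_imp_le)
  qed
  have qf0: "qf 0 = q0" unfolding qf_def cs0 q0_def by (simp add: z0 complex_eq_iff)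
  have cont: "continuous (at 0) qf"
    unfolding qf_def z_def
    by (intro continuous_intros continuous_at_compose[of _ _ csqrt] continuous_at_csqrt)
       (use nn in \<open>simp_all add: z_def\<close>)
  hence lim: "(qf \<longlongrightarrow> q0) (at_right 0)"
    using qf0 by (metis continuous_within tendsto_mono at_le subset_UNIV)
  have "\<forall>\<^sub>F \<epsilon> in at_right 0. Im (qf \<epsilon>) < 0"
  proof -
    have "((\<lambda>\<epsilon>. Im (qf \<epsilon>)) \<longlongrightarrow> Im q0) (at_right 0)" by (intro tendsto_intros lim)
    moreover have "Im q0 < 0" unfolding q0_def using E4 by simp
    ultimately show ?thesis by (rule order_tendstoD)
  qed
  moreover have "\<forall>\<^sub>F \<epsilon> in at_right (0::real). 0 < \<epsilon>" by (simp add: eventually_at_right_less)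
  ultimately have ev: "\<forall>\<^sub>F \<epsilon> in at_right 0. msc (z \<epsilon>) = - qf \<epsilon>"
  proof eventually_elim
    case (elim \<epsilon>)
    define q' where "q' = (z \<epsilon> + \<i> * csqrt (4 - (z \<epsilon>)\<^sup>2)) / 2"
    have prod: "qf \<epsilon> * q' = 1"
    proof -
      have "qf \<epsilon> * q' = ((z \<epsilon>)\<^sup>2 - \<i>\<^sup>2 * (csqrt (4 - (z \<epsilon>)\<^sup>2))\<^sup>2) / 4"
        unfolding qf_def q'_def by (simp add: power2_eq_square algebra_simps)
      also have "\<dots> = 1" by simp
      finally show ?thesis .
    qed
    hence q0': "qf \<epsilon> \<noteq> 0" by auto
    have inv: "1 / qf \<epsilon> = q'" using inverse_unique[OF prod] by (simp only: inverse_eq_divide)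
    have sum: "qf \<epsilon> + 1 / qf \<epsilon> = z \<epsilon>"
    proof -
      have "qf \<epsilon> + 1 / qf \<epsilon> = qf \<epsilon> + q'" by (simp only: inv)
      also have "\<dots> = z \<epsilon>" unfolding qf_def q'_def by (simp add: field_simps)
      finally show ?thesis .
    qed
    have "0 < Im (qf \<epsilon> + 1 / qf \<epsilon>)" unfolding sum z_def using elim by simp
    hence "cmod (qf \<epsilon>) < 1" using q_inside q0' elim by blast
    from msc_closed[OF q0' this] show ?case unfolding sum .
  qed
  have "((\<lambda>\<epsilon>. - qf \<epsilon>) \<longlongrightarrow> - q0) (at_right 0)" by (intro tendsto_intros lim)
  hence "((\<lambda>\<epsilon>. msc (z \<epsilon>)) \<longlongrightarrow> - q0) (at_right 0)"
    by (rule tendsto_cong[THEN iffD1, rotated]) (use ev in \<open>simp add: eventually_mono\<close>)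
  moreover have "(\<lambda>\<epsilon>. msc (z \<epsilon>)) = (\<lambda>\<epsilon>. msc (complex_of_real E + \<i> * complex_of_real \<epsilon>))"
    unfolding z_def ..
  ultimately have "mE E = - q0" unfolding mE_def by (intro tendsto_Lim) auto
  thus ?thesis unfolding q0_def by (simp add: complex_eq_iff)
qed


lemma mE_props:
  assumes E: "\<bar>E\<bar> < 2"
  shows "cmod (mE E) = 1" "0 < Im (mE E)"
proof -
  have E4: "0 < 4 - E\<^sup>2"
  proof -
    have "\<bar>E\<bar> * \<bar>E\<bar> < 2 * 2" using E by (intro mult_strict_mono) auto
    hence "E * E < 4" by (simp add: abs_mult_self_eq)
    thus ?thesis by (simp add: power2_eq_square)
  qed
  have sq: "(sqrt (4 - E\<^sup>2))\<^sup>2 = 4 - E\<^sup>2" using E4 by simp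
  have "(cmod (mE E))\<^sup>2 = (E / 2)\<^sup>2 + (sqrt (4 - E\<^sup>2) / 2)\<^sup>2"
    unfolding mE_val[OF E] cmod_power2 by simp
  also have "\<dots> = 1" unfolding power_divide sq by (simp add: field_simps)
  finally have "cmod (mE E) = 1 \<or> cmod (mE E) = - 1" by (simp only: power2_eq_1_iff)
  thus "cmod (mE E) = 1" using norm_ge_zero[of "mE E"] by linarith
  show "0 < Im (mE E)" unfolding mE_val[OF E] using E4 by simp
qed

lemma msig_norm: "\<bar>E\<bar> < 2 \<Longrightarrow> cmod (msig E b) = 1"
  unfolding msig_def using mE_props(1)[of E] by simp

theorem lemma7p1:
  fixes E :: real and L :: "nat \<Rightarrow> nat" and n :: nat
  assumes "\<bar>E\<bar> < 2" and "n \<ge> 2" and "\<forall>N. L N \<ge> 1"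
  shows "\<forall>\<epsilon>>0. \<forall>\<^sub>F N in sequentially.
           \<forall>\<sigma> s t A. 0 \<le> s \<longrightarrow> s < t \<longrightarrow> t < 1 \<longrightarrow>
             maxnorm (L N) n (Uop E (L N) n s t \<sigma> A)
               \<le> real N powr \<epsilon> * maxnorm (L N) n A * (eta E s / eta E t) ^ n"
proof (intro allI impI)
  fix \<epsilon> :: real assume "\<epsilon> > 0"
  have im: "0 < Im (mE E)" using mE_props(2)[OF assms(1)] .
  show "\<forall>\<^sub>F N in sequentially.
           \<forall>\<sigma> s t A. 0 \<le> s \<longrightarrow> s < t \<longrightarrow> t < 1 \<longrightarrow>
             maxnorm (L N) n (Uop E (L N) n s t \<sigma> A)
               \<le> real N powr \<epsilon> * maxnorm (L N) n A * (eta E s / eta E t) ^ n"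
    using eventually_ge_at_top[of "1::nat"]
  proof eventually_elim
    case (elim N)
    show ?case
    proof (intro allI impI)
      fix \<sigma> :: "nat \<Rightarrow> bool" and s t :: real and A :: "(nat \<Rightarrow> nat) \<Rightarrow> complex"
      assume st: "0 \<le> s" "s < t" "t < 1"
      have LN: "L N \<ge> 1" using assms(3) by simp
      have x: "cmod (msig E (\<sigma> i) * msig E (\<sigma> ((i + 1) mod n))) \<le> 1" for i
        using msig_norm[OF assms(1)] by (simp add: norm_mult)
      have eq: "eta E s / eta E t = (1 - s) / (1 - t)"
        unfolding eta_def using im st by simp
      have r0: "0 \<le> ((1 - s) / (1 - t)) ^ n" using st by simp
      have "maxnorm (L N) n (Uop E (L N) n s t \<sigma> A) \<le> maxnorm (L N) n A * ((1 - s) / (1 - t)) ^ n"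
        by (rule Uop_bound[where \<sigma>=\<sigma> and A=A and E=E, OF LN x st(2,3,1)])
      also have "\<dots> \<le> real N powr \<epsilon> * (maxnorm (L N) n A * ((1 - s) / (1 - t)) ^ n)"
      proof -
        have "1 \<le> real N powr \<epsilon>" using elim \<open>\<epsilon> > 0\<close> by (intro ge_one_powr_ge_zero) auto
        moreover have "0 \<le> maxnorm (L N) n A * ((1 - s) / (1 - t)) ^ n"
          using maxnorm_nonneg[OF LN] r0 by simp
        ultimately show ?thesis using mult_right_mono[of 1 "real N powr \<epsilon>" "maxnorm (L N) n A * ((1 - s) / (1 - t)) ^ n"] by simp
      qed
      finally show "maxnorm (L N) n (Uop E (L N) n s t \<sigma> A)
               \<le> real N powr \<epsilon> * maxnorm (L N) n A * (eta E s / eta E t) ^ n"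
        by (simp only: eq mult.assoc)
    qed
  qed
qed

end
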